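(* There exist a meromorphic function $f:\mathbb{D}\to\mathbb{P}$ of bounded Nevanlinna characteristic (i.e. $\sup_{r<1}T(f;r)<\infty$) and $\theta\in\mathbb{R}$ such that, with $\gamma(t)=\tanh(\frac t2)e^{i\theta}$ and $L_S(\rho_0)=\int_0^{\rho_0}\|f'(\gamma(t))\|_{H\to S}\,dt$, one has $L_S(\rho_0)/\rho_0\to\infty$ as $\rho_0\to\infty$; in particular $L_S(\rho_0)\neq O(\rho_0)$.
   Context: $\mathbb{D}=\{|z|<1\}$ carries the hyperbolic metric with density $\lambda_H(z)=2/(1-|z|^2)$; $\mathbb{P}=\mathbb{C}\cup\{\infty\}$ carries the spherical metric with density $\lambda_S(w)=2/(1+|w|^2)$; $\|f'(z)\|_{H\to S}=\frac{2|f'(z)|}{1+|f(z)|^2}\cdot\frac{1-|z|^2}{2}$ (extended continuously at poles). The Nevanlinna characteristic is $T(f;r)=\int_0^r S(f;s)\frac{ds}{s}$ with $S(f;s)=\frac{1}{4\pi}\int_{|z|<s}|f'(z)|^2\lambda_S(f(z))^2\,dx\,dy$. *)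

theory Defs
  imports "HOL-Analysis.Analysis" "HOL-Library.Landau_Symbols"
begin

text \<open>Meromorphic function on the unit disc, represented as f :: complex => complex
  together with a pole set P (discrete in the disc); the values of f at the poles are
  irrelevant (they stand for the point at infinity).\<close>
definition meromorphic_disc :: "(complex \<Rightarrow> complex) \<Rightarrow> bool" where
  "meromorphic_disc f \<longleftrightarrow>
     (\<exists>P. P \<subseteq> ball 0 1 \<and> (\<forall>z\<in>ball 0 1. \<not> z islimpt P) \<and>
          f holomorphic_on (ball 0 1 - P) \<and>
          (\<forall>p\<in>P. \<exists>r>0. \<exists>g. g holomorphic_on ball p r \<and> g p = 0 \<and>
                 (\<forall>z\<in>ball p r - {p}. g z \<noteq> 0 \<and> f z = inverse (g z))))"

text \<open>Hyperbolic-to-spherical derivative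
  2|f'(z)|/(1+|f(z)|^2) * (1-|z|^2)/2, extended continuously (taken as a limit).\<close>
definition sph_deriv :: "(complex \<Rightarrow> complex) \<Rightarrow> complex \<Rightarrow> real" where
  "sph_deriv f z = Lim (at z)
     (\<lambda>w. (2 * cmod (deriv f w) / (1 + (cmod (f w))\<^sup>2)) * ((1 - (cmod w)\<^sup>2) / 2))"

definition nev_S :: "(complex \<Rightarrow> complex) \<Rightarrow> real \<Rightarrow> ennreal" where
  "nev_S f s = (\<integral>\<^sup>+ z. ennreal ((cmod (deriv f z))\<^sup>2 * (2 / (1 + (cmod (f z))\<^sup>2))\<^sup>2)
                    * indicator (ball 0 s) z \<partial>lborel) / ennreal (4 * pi)"

definition nev_T :: "(complex \<Rightarrow> complex) \<Rightarrow> real \<Rightarrow> ennreal" where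
  "nev_T f r = (\<integral>\<^sup>+ s. nev_S f s * ennreal (1 / s) * indicator {0<..<r} s \<partial>lborel)"

definition bounded_characteristic :: "(complex \<Rightarrow> complex) \<Rightarrow> bool" where
  "bounded_characteristic f \<longleftrightarrow> (\<exists>B::real. \<forall>r. 0 < r \<and> r < 1 \<longrightarrow> nev_T f r \<le> ennreal B)"

definition geo_ray :: "real \<Rightarrow> real \<Rightarrow> complex" where
  "geo_ray \<theta> t = complex_of_real (tanh (t / 2)) * cis \<theta>"

definition L_S :: "(complex \<Rightarrow> complex) \<Rightarrow> real \<Rightarrow> real \<Rightarrow> real" where
  "L_S f \<theta> \<rho> = integral {0..\<rho>} (\<lambda>t. sph_deriv f (geo_ray \<theta> t))"

end

theory Submission
  imports Defs "HOL-Real_Asymp.Real_Asymp"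
begin

definition hh :: "complex \<Rightarrow> complex" where "hh z = (1 - z) powr (-1/4)"
definition ff :: "complex \<Rightarrow> complex" where "ff z = exp (\<i> * hh z)"

lemma nonpos_aux: fixes z :: complex shows "z \<in> ball 0 1 \<Longrightarrow> 1 - z \<notin> \<real>\<^sub>\<le>\<^sub>0"
proof
  assume z: "z \<in> ball 0 1" and "1 - z \<in> \<real>\<^sub>\<le>\<^sub>0"
  then have "Re (1 - z) \<le> 0" by (auto simp: nonpos_Reals_def complex_eq_iff)
  moreover have "\<bar>Re z\<bar> < 1" using z abs_Re_le_cmod[of z] by simp
  ultimately show False by simp
qed

lemma hh_deriv: assumes "z \<in> ball 0 1"
  shows "(hh has_field_derivative ((1/4) * (1 - z) powr (-5/4))) (at z)"
proof -
  have d1: "((\<lambda>w. w powr (-1/4)) has_field_derivative ((-1/4) * (1-z) powr (-1/4 - 1))) (at (1 - z))"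
    by (rule has_field_derivative_powr[OF nonpos_aux[OF assms]])
  have d2: "((\<lambda>w. 1 - w) has_field_derivative -1) (at z)" by (auto intro!: derivative_eq_intros)
  from DERIV_chain2[of "\<lambda>w. w powr (-1/4)" _ "\<lambda>w. 1-w", OF d1 d2]
  have "((\<lambda>w. (1 - w) powr (-1/4)) has_field_derivative ((-1/4) * (1-z) powr (-1/4 - 1)) * -1) (at z)" .
  moreover have "(-1/4 - 1 :: complex) = -5/4" by simp
  ultimately show ?thesis unfolding hh_def by simp
qed

lemma ff_deriv: assumes "z \<in> ball 0 1"
  shows "(ff has_field_derivative (\<i> * ((1/4) * (1 - z) powr (-5/4)) * ff z)) (at z)"
proof -
  have d2: "((\<lambda>w. \<i> * hh w) has_field_derivative \<i> * ((1/4) * (1 - z) powr (-5/4))) (at z)"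
    by (auto intro!: derivative_eq_intros hh_deriv[OF assms])
  from DERIV_chain2[OF DERIV_exp d2] show ?thesis unfolding ff_def by (simp add: mult.commute)
qed

lemma deriv_ff: "z \<in> ball 0 1 \<Longrightarrow> deriv ff z = \<i> * ((1/4) * (1 - z) powr (-5/4)) * ff z"
  using ff_deriv DERIV_imp_deriv by blast

lemma ff_holo: "ff holomorphic_on ball 0 1"
  using ff_deriv holomorphic_on_open open_ball by blast

lemma norm_deriv_ff: "z \<in> ball 0 1 \<Longrightarrow> cmod (deriv ff z) = (1/4) * cmod (1 - z) powr (-5/4) * cmod (ff z)"
  by (simp add: deriv_ff norm_mult norm_powr_real_powr')

lemma tst: "filterlim (\<lambda>\<rho>::real. ((1 - tanh (\<rho>/2)) powr (-1/4) - 1) / \<rho>) at_top at_top"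
  by real_asymp

lemma hh_real: assumes "r < 1" shows "hh (of_real r) = of_real ((1 - r) powr (-1/4))"
proof -
  have "hh (of_real r) = of_real (1 - r) powr of_real (-1/4)" unfolding hh_def by simp
  also have "\<dots> = of_real ((1 - r) powr (-1/4))" using assms by (intro powr_of_real) simp
  finally show ?thesis .
qed

lemma norm_ff_real: assumes "r < 1" shows "cmod (ff (of_real r)) = 1"
  unfolding ff_def hh_real[OF assms] by (rule norm_exp_i_times)

definition EE :: "complex \<Rightarrow> real" where
  "EE w = (2 * ((1/4) * cmod (1 - w) powr (-5/4) * cmod (ff w)) / (1 + (cmod (ff w))\<^sup>2)) * ((1 - (cmod w)\<^sup>2) / 2)"

lemma sph_deriv_ff: assumes "z \<in> ball 0 1" shows "sph_deriv ff z = EE z"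
proof -
  have ev: "eventually (\<lambda>w. w \<in> ball 0 1) (at z)"
    using assms by (intro eventually_at_in_open') auto
  have cff: "isCont ff z"
    using ff_holo assms holomorphic_on_imp_continuous_on continuous_on_eq_continuous_at open_ball by blast
  have nz: "1 - z \<noteq> 0" using assms by auto
  have "isCont EE z" unfolding EE_def
    by (intro continuous_intros) (use cff nz in \<open>auto simp: add_nonneg_eq_0_iff\<close>)
  then have "(EE \<longlongrightarrow> EE z) (at z)" by (simp add: isCont_def)
  then have "((\<lambda>w. (2 * cmod (deriv ff w) / (1 + (cmod (ff w))\<^sup>2)) * ((1 - (cmod w)\<^sup>2) / 2)) \<longlongrightarrow> EE z) (at z)"
    by (rule tendsto_cong[THEN iffD1, rotated]) (use ev in \<open>eventually_elim, simp add: EE_def norm_deriv_ff\<close>)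
  then show ?thesis unfolding sph_deriv_def by (intro tendsto_Lim) auto
qed

lemma geo_ray0: "geo_ray 0 t = of_real (tanh (t/2))"
  by (simp add: geo_ray_def)

lemma tanh_bound: "\<bar>tanh (x::real)\<bar> < 1" by (simp add: abs_less_iff tanh_real_lt_1 tanh_real_gt_neg1)

lemma sph_ray: "sph_deriv ff (geo_ray 0 t) = (1/4) * (1 - tanh (t/2)) powr (-5/4) * ((1 - (tanh (t/2))\<^sup>2) / 2)"
proof -
  have b: "\<bar>tanh (t/2)\<bar> < 1" by (rule tanh_bound)
  then have "of_real (tanh (t/2)) \<in> ball (0::complex) 1" by simp
  then have "sph_deriv ff (geo_ray 0 t) = EE (of_real (tanh (t/2)))"
    by (simp add: geo_ray0 sph_deriv_ff)
  also have "\<dots> = (1/4) * (1 - tanh (t/2)) powr (-5/4) * ((1 - (tanh (t/2))\<^sup>2) / 2)"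
  proof -
    have "cmod (1 - complex_of_real (tanh (t/2))) = 1 - tanh (t/2)"
    proof -
      have "1 - complex_of_real (tanh (t/2)) = of_real (1 - tanh (t/2))" by simp
      then show ?thesis using b by (simp only: norm_of_real)
    qed
    then show ?thesis using b unfolding EE_def by (simp add: norm_ff_real)
  qed
  finally show ?thesis .
qed

lemma L_S_ff: assumes "0 \<le> \<rho>" shows "L_S ff 0 \<rho> = (1 - tanh (\<rho>/2)) powr (-1/4) - 1"
proof -
  have "((\<lambda>t. (1/4) * (1 - tanh (t/2)) powr (-5/4) * ((1 - (tanh (t/2))\<^sup>2) / 2)) has_integral
        ((1 - tanh (\<rho>/2)) powr (-1/4) - (1 - tanh (0/2)) powr (-1/4))) {0..\<rho>}"
  proof (rule fundamental_theorem_of_calculus[OF assms, of "\<lambda>t. (1 - tanh (t/2)) powr (-1/4)"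
       "\<lambda>t. (1/4) * (1 - tanh (t/2)) powr (-5/4) * ((1 - (tanh (t/2))\<^sup>2) / 2)"])
    fix x assume "x \<in> {0..\<rho>}"
    have b: "tanh (x/2) < 1" using tanh_bound[of "x/2"] by simp
    have D: "((\<lambda>t. (1 - tanh (t/2)) powr (-1/4)) has_real_derivative
       (-1/4) * (1 - tanh (x/2)) powr (-1/4 - 1) * (- ((1 - (tanh (x/2))\<^sup>2) * (1/2)))) (at x)"
      using b by (auto intro!: derivative_eq_intros simp: power2_eq_square)
    have e: "(-1/4 - 1 :: real) = -5/4" by simp
    have "((\<lambda>t. (1 - tanh (t/2)) powr (-1/4)) has_real_derivative
       (1/4) * (1 - tanh (x/2)) powr (-5/4) * ((1 - (tanh (x/2))\<^sup>2) / 2)) (at x)"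
      by (rule DERIV_cong[OF D]) (simp add: e field_simps)
    then show "((\<lambda>t. (1 - tanh (t/2)) powr (-1/4)) has_vector_derivative
       (1/4) * (1 - tanh (x/2)) powr (-5/4) * ((1 - (tanh (x/2))\<^sup>2) / 2)) (at x within {0..\<rho>})"
      using has_real_derivative_iff_has_vector_derivative has_field_derivative_at_within by blast
  qed
  note I = integral_unique[OF this]
  show ?thesis unfolding L_S_def sph_ray I by simp
qed

lemma I1: fixes s :: real assumes "0 \<le> s" "s < 1"
  shows "((\<lambda>x. (1-x) powr (-7/4)) has_integral ((4/3) * (1-s) powr (-3/4) - (4/3) * (1+s) powr (-3/4))) {-s..s}"
proof -
  have "((\<lambda>x. (1-x) powr (-7/4)) has_integral ((\<lambda>x. (4/3) * (1-x) powr (-3/4)) s - (\<lambda>x. (4/3) * (1-x) powr (-3/4)) (-s))) {-s..s}"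
  proof (rule fundamental_theorem_of_calculus)
    show "-s \<le> s" using assms by simp
  next
    fix x assume x: "x \<in> {-s..s}"
    then have b: "x < 1" using assms by auto
    have D: "((\<lambda>x. (4/3) * (1-x) powr (-3/4)) has_real_derivative (4/3) * ((-3/4) * (1 - x) powr (-3/4 - 1) * (-1))) (at x)"
      using b by (auto intro!: derivative_eq_intros)
    have e: "(-3/4 - 1 :: real) = -7/4" by simp
    have "((\<lambda>x. (4/3) * (1-x) powr (-3/4)) has_real_derivative (1-x) powr (-7/4)) (at x)"
      by (rule DERIV_cong[OF D]) (simp add: e)
    then show "((\<lambda>x. (4/3) * (1-x) powr (-3/4)) has_vector_derivative (1-x) powr (-7/4)) (at x within {-s..s})"
      using has_real_derivative_iff_has_vector_derivative has_field_derivative_at_within by blast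
  qed
  then show ?thesis by simp
qed

lemma I2a: fixes s :: real assumes "0 \<le> s"
  shows "((\<lambda>y. \<bar>y\<bar> powr (-3/4)) has_integral (4 * s powr (1/4))) {0..s}"
proof -
  have "((\<lambda>y. \<bar>y\<bar> powr (-3/4)) has_integral ((\<lambda>y. 4 * y powr (1/4)) s - (\<lambda>y. 4 * y powr (1/4)) 0)) {0..s}"
  proof (rule fundamental_theorem_of_calculus_interior[OF assms])
    show "continuous_on {0..s} (\<lambda>y. 4 * y powr (1/4))"
      by (intro continuous_intros continuous_on_powr') auto
  next
    fix x assume x: "x \<in> {0<..<s}"
    have D: "((\<lambda>y. 4 * y powr (1/4)) has_real_derivative 4 * ((1/4) * x powr (1/4 - 1))) (at x)"
      using x by (auto intro!: derivative_eq_intros)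
    have e: "(1/4 - 1 :: real) = -3/4" by simp
    have "((\<lambda>y. 4 * y powr (1/4)) has_real_derivative \<bar>x\<bar> powr (-3/4)) (at x)"
      by (rule DERIV_cong[OF D]) (use x in \<open>simp add: e\<close>)
    then show "((\<lambda>y. 4 * y powr (1/4)) has_vector_derivative \<bar>x\<bar> powr (-3/4)) (at x)"
      using has_real_derivative_iff_has_vector_derivative by blast
  qed
  then show ?thesis by simp
qed

lemma I2b: fixes s :: real assumes "0 \<le> s"
  shows "((\<lambda>y. \<bar>y\<bar> powr (-3/4)) has_integral (4 * s powr (1/4))) {-s..0}"
proof -
  have "((\<lambda>y. \<bar>y\<bar> powr (-3/4)) has_integral ((\<lambda>y. - 4 * (-y) powr (1/4)) 0 - (\<lambda>y. - 4 * (-y) powr (1/4)) (-s))) {-s..0}"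
  proof (rule fundamental_theorem_of_calculus_interior)
    show "-s \<le> 0" using assms by simp
    show "continuous_on {-s..0} (\<lambda>y. - 4 * (-y) powr (1/4))"
      by (intro continuous_intros continuous_on_powr') auto
  next
    fix x assume x: "x \<in> {-s<..<0}"
    have D: "((\<lambda>y. - 4 * (-y) powr (1/4)) has_real_derivative - 4 * ((1/4) * (-x) powr (1/4 - 1) * (-1))) (at x)"
      using x by (auto intro!: derivative_eq_intros)
    have e: "(1/4 - 1 :: real) = -3/4" by simp
    have "((\<lambda>y. - 4 * (-y) powr (1/4)) has_real_derivative \<bar>x\<bar> powr (-3/4)) (at x)"
      by (rule DERIV_cong[OF D]) (use x in \<open>simp add: e\<close>)
    then show "((\<lambda>y. - 4 * (-y) powr (1/4)) has_vector_derivative \<bar>x\<bar> powr (-3/4)) (at x)"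
      using has_real_derivative_iff_has_vector_derivative by blast
  qed
  then show ?thesis by simp
qed

lemma I2: fixes s :: real assumes "0 \<le> s"
  shows "((\<lambda>y. \<bar>y\<bar> powr (-3/4)) has_integral (8 * s powr (1/4))) {-s..s}"
proof -
  have "((\<lambda>y. \<bar>y\<bar> powr (-3/4)) has_integral (4 * s powr (1/4) + 4 * s powr (1/4))) {-s..s}"
    by (rule has_integral_combine[of "-s" 0 s]) (use assms I2a I2b in auto)
  moreover have "4 * s powr (1/4) + 4 * s powr (1/4) = 8 * s powr (1/4)" by simp
  ultimately show ?thesis by simp
qed

lemma I3a: "((\<lambda>y::real. y powr (-3/4)) has_integral 4) {0..1}"
proof -
  have "((\<lambda>y. y powr (-3/4)) has_integral (4 * 1 powr (1/4))) {0..1::real}"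
    by (rule has_integral_eq[OF _ I2a[of 1]]) auto
  then show ?thesis by simp
qed

lemma I3b: "((\<lambda>y::real. (1 - y) powr (-3/4)) has_integral 4) {0..1}"
proof -
  have "((\<lambda>y::real. (1 - y) powr (-3/4)) has_integral ((\<lambda>y. - 4 * (1-y) powr (1/4)) 1 - (\<lambda>y. - 4 * (1-y) powr (1/4)) 0)) {0..1}"
  proof (rule fundamental_theorem_of_calculus_interior)
    show "continuous_on {0..1} (\<lambda>y::real. - 4 * (1-y) powr (1/4))"
      by (intro continuous_intros continuous_on_powr') auto
  next
    fix x :: real assume x: "x \<in> {0<..<1}"
    have D: "((\<lambda>y. - 4 * (1-y) powr (1/4)) has_real_derivative - 4 * ((1/4) * (1-x) powr (1/4 - 1) * (-1))) (at x)"
      using x by (auto intro!: derivative_eq_intros)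
    have e: "(1/4 - 1 :: real) = -3/4" by simp
    have "((\<lambda>y. - 4 * (1-y) powr (1/4)) has_real_derivative (1-x) powr (-3/4)) (at x)"
      by (rule DERIV_cong[OF D]) (use x in \<open>simp add: e\<close>)
    then show "((\<lambda>y. - 4 * (1-y) powr (1/4)) has_vector_derivative (1-x) powr (-3/4)) (at x)"
      using has_real_derivative_iff_has_vector_derivative by blast
  qed simp
  then show ?thesis by simp
qed

lemma nn_int_interval:
  fixes f :: "real \<Rightarrow> real"
  assumes "(f has_integral I) {a..b}" "\<And>x. x \<in> {a..b} \<Longrightarrow> 0 \<le> f x" and [measurable]: "f \<in> borel_measurable borel"
  shows "(\<integral>\<^sup>+x. ennreal (if x \<in> {a..b} then f x else 0) \<partial>lborel) = ennreal I"
proof (rule nn_integral_has_integral_lborel)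
  show "(\<lambda>x. if x \<in> {a..b} then f x else 0) \<in> borel_measurable borel" by measurable
  show "0 \<le> (if x \<in> {a..b} then f x else 0)" for x using assms(2) by auto
  show "((\<lambda>x. if x \<in> {a..b} then f x else 0) has_integral I) UNIV"
    using assms(1) by (rule has_integral_restrict_UNIV[THEN iffD2])
qed

lemma P2: fixes z :: complex assumes "Re z < 1" "Im z \<noteq> 0"
  shows "cmod (1 - z) powr (-5/2) \<le> (1 - Re z) powr (-7/4) * \<bar>Im z\<bar> powr (-3/4)"
proof -
  define c where "c = cmod (1 - z)"
  define a where "a = 1 - Re z"
  define y where "y = \<bar>Im z\<bar>"
  have a: "0 < a" "a \<le> c" unfolding a_def c_def using assms complex_Re_le_cmod[of "1 - z"] by auto
  have y: "0 < y" "y \<le> c" unfolding y_def c_def using assms abs_Im_le_cmod[of "1 - z"] by auto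
  have c: "0 < c" using a by simp
  have "a powr (7/4) * y powr (3/4) \<le> c powr (7/4) * c powr (3/4)"
    using a y by (intro mult_mono powr_mono2) auto
  also have "\<dots> = c powr (5/2)" by (simp add: powr_add[symmetric])
  finally have le: "a powr (7/4) * y powr (3/4) \<le> c powr (5/2)" .
  have pos: "0 < a powr (7/4) * y powr (3/4)" using a y by simp
  have "c powr (-5/2) = inverse (c powr (5/2))" by (simp add: powr_minus)
  also have "\<dots> \<le> inverse (a powr (7/4) * y powr (3/4))"
    using le pos by (intro le_imp_inverse_le) auto
  also have "\<dots> = a powr (-7/4) * y powr (-3/4)" by (simp add: powr_minus)
  finally show ?thesis unfolding a_def y_def c_def .
qed

definition Phi :: "real \<Rightarrow> real \<Rightarrow> ennreal" where
  "Phi s x = ennreal (if x \<in> {-s..s} then (1/16) * (1-x) powr (-7/4) else 0)"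
definition Psi :: "real \<Rightarrow> real \<Rightarrow> ennreal" where
  "Psi s y = (if y = 0 then top else ennreal (if y \<in> {-s..s} then \<bar>y\<bar> powr (-3/4) else 0))"

lemma Phi_meas[measurable]: "Phi s \<in> borel_measurable borel"
  unfolding Phi_def by measurable
lemma Psi_meas[measurable]: "Psi s \<in> borel_measurable borel"
  unfolding Psi_def by measurable

lemma int_Phi: fixes s :: real assumes "0 \<le> s" "s < 1"
  shows "(\<integral>\<^sup>+x. Phi s x \<partial>lborel) \<le> ennreal ((1/16) * ((4/3) * (1-s) powr (-3/4)))"
proof -
  have "((\<lambda>x. (1/16) * (1-x) powr (-7/4)) has_integral (1/16) * ((4/3) * (1-s) powr (-3/4) - (4/3) * (1+s) powr (-3/4))) {-s..s}"
    by (rule has_integral_mult_right[OF I1[OF assms]])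
  from nn_int_interval[OF this]
  have "(\<integral>\<^sup>+x. Phi s x \<partial>lborel) = ennreal ((1/16) * ((4/3) * (1-s) powr (-3/4) - (4/3) * (1+s) powr (-3/4)))"
    unfolding Phi_def by auto
  also have "\<dots> \<le> ennreal ((1/16) * ((4/3) * (1-s) powr (-3/4)))"
    by (intro ennreal_leI) auto
  finally show ?thesis .
qed

lemma int_Psi: fixes s :: real assumes "0 \<le> s"
  shows "(\<integral>\<^sup>+y. Psi s y \<partial>lborel) = ennreal (8 * s powr (1/4))"
proof -
  have "(\<integral>\<^sup>+y. Psi s y \<partial>lborel) = (\<integral>\<^sup>+y. ennreal (if y \<in> {-s..s} then \<bar>y\<bar> powr (-3/4) else 0) \<partial>lborel)"
    by (rule nn_integral_cong_AE) (use AE_lborel_singleton[of 0] in \<open>eventually_elim, simp add: Psi_def\<close>)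
  also have "\<dots> = ennreal (8 * s powr (1/4))"
    by (rule nn_int_interval[OF I2[OF assms]]) auto
  finally show ?thesis .
qed

lemma int_prod: fixes s :: real
  shows "(\<integral>\<^sup>+z. Phi s (Re z) * Psi s (Im z) \<partial>lborel) = (\<integral>\<^sup>+x. Phi s x \<partial>lborel) * (\<integral>\<^sup>+y. Psi s y \<partial>lborel)"
proof -
  let ?f = "\<lambda>b::complex. if b = 1 then Phi s else Psi s"
  have "(\<integral>\<^sup>+z. (\<Prod>b\<in>Basis. ?f b (z \<bullet> b)) \<partial>lborel) = (\<Prod>b\<in>Basis. (\<integral>\<^sup>+x. ?f b x \<partial>lborel))"
    by (rule nn_integral_lborel_prod) auto
  then show ?thesis by (simp add: Basis_complex_def inner_complex_def)
qed

lemma P1: assumes "z \<in> ball 0 1"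
  shows "(cmod (deriv ff z))\<^sup>2 * (2 / (1 + (cmod (ff z))\<^sup>2))\<^sup>2 \<le> (1/16) * cmod (1 - z) powr (-5/2)"
proof -
  define m where "m = cmod (ff z)"
  define c where "c = cmod (1 - z)"
  have m: "0 \<le> m" unfolding m_def by simp
  have c: "0 < c" unfolding c_def using assms by auto
  have cc: "(c powr (-5/4))\<^sup>2 = c powr (-5/2)"
    by (simp add: power2_eq_square powr_add[symmetric])
  have q: "(2 * m / (1 + m\<^sup>2))\<^sup>2 \<le> 1"
  proof -
    have "0 \<le> 2 * m / (1 + m\<^sup>2)" using m by simp
    moreover have "2 * m / (1 + m\<^sup>2) \<le> 1"
    proof -
      have "0 \<le> (m - 1)\<^sup>2" by simp
      then have "2 * m \<le> 1 + m\<^sup>2" by (simp add: power2_diff)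
      moreover have "0 < 1 + m\<^sup>2" by (simp add: add_pos_nonneg)
      ultimately show ?thesis by simp
    qed
    ultimately show ?thesis by (simp add: power_le_one)
  qed
  have "(cmod (deriv ff z))\<^sup>2 * (2 / (1 + (cmod (ff z))\<^sup>2))\<^sup>2 = (1/16) * c powr (-5/2) * (2 * m / (1 + m\<^sup>2))\<^sup>2"
    unfolding norm_deriv_ff[OF assms] m_def[symmetric] c_def[symmetric] cc[symmetric]
    by (simp add: power_mult_distrib power_divide)
  also have "\<dots> \<le> (1/16) * c powr (-5/2) * 1"
    using q c by (intro mult_left_mono) auto
  finally show ?thesis unfolding c_def by simp
qed

lemma pointwise: fixes s :: real assumes "0 < s" "s < 1"
  shows "ennreal ((cmod (deriv ff z))\<^sup>2 * (2 / (1 + (cmod (ff z))\<^sup>2))\<^sup>2) * indicator (ball 0 s) z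
         \<le> Phi s (Re z) * Psi s (Im z)"
proof (cases "z \<in> ball 0 s")
  case False then show ?thesis by simp
next
  case True
  then have z1: "z \<in> ball 0 1" using assms by auto
  have re: "Re z \<in> {-s..s}" "Im z \<in> {-s..s}"
    using True abs_Re_le_cmod[of z] abs_Im_le_cmod[of z] by auto
  have rl: "Re z < 1" using re assms by auto
  have phipos: "Phi s (Re z) = ennreal ((1/16) * (1 - Re z) powr (-7/4))"
    using re unfolding Phi_def by simp
  have phinz: "Phi s (Re z) \<noteq> 0" unfolding phipos using rl by simp
  show ?thesis
  proof (cases "Im z = 0")
    case True
    then have "Phi s (Re z) * Psi s (Im z) = top" unfolding Psi_def using phinz
      by (simp add: ennreal_mult_top)
    then show ?thesis by simp
  next
    case False
    have "(cmod (deriv ff z))\<^sup>2 * (2 / (1 + (cmod (ff z))\<^sup>2))\<^sup>2 \<le> (1/16) * cmod (1 - z) powr (-5/2)"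
      by (rule P1[OF z1])
    also have "\<dots> \<le> (1/16) * ((1 - Re z) powr (-7/4) * \<bar>Im z\<bar> powr (-3/4))"
      using P2[OF rl False] by simp
    finally have le: "(cmod (deriv ff z))\<^sup>2 * (2 / (1 + (cmod (ff z))\<^sup>2))\<^sup>2 \<le> (1/16) * (1 - Re z) powr (-7/4) * \<bar>Im z\<bar> powr (-3/4)"
      by simp
    have ps: "Psi s (Im z) = ennreal (\<bar>Im z\<bar> powr (-3/4))" unfolding Psi_def using False re by simp
    have "Phi s (Re z) * Psi s (Im z) = ennreal ((1/16) * (1 - Re z) powr (-7/4) * \<bar>Im z\<bar> powr (-3/4))"
      unfolding phipos ps by (rule ennreal_mult[symmetric]) simp_all
    then show ?thesis using True le by (simp add: ennreal_leI)
  qed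
qed

lemma nevS_bound: fixes s :: real assumes "0 < s" "s < 1"
  shows "nev_S ff s \<le> ennreal ((1/16) * ((4/3) * (1-s) powr (-3/4)) * (8 * s powr (1/4)) / (4 * pi))"
proof -
  have "(\<integral>\<^sup>+ z. ennreal ((cmod (deriv ff z))\<^sup>2 * (2 / (1 + (cmod (ff z))\<^sup>2))\<^sup>2) * indicator (ball 0 s) z \<partial>lborel)
        \<le> (\<integral>\<^sup>+z. Phi s (Re z) * Psi s (Im z) \<partial>lborel)"
    by (rule nn_integral_mono) (rule pointwise[OF assms])
  also have "\<dots> = (\<integral>\<^sup>+x. Phi s x \<partial>lborel) * (\<integral>\<^sup>+y. Psi s y \<partial>lborel)" by (rule int_prod)
  also have "\<dots> \<le> ennreal ((1/16) * ((4/3) * (1-s) powr (-3/4))) * ennreal (8 * s powr (1/4))"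
    using int_Phi[of s] int_Psi[of s] assms by (intro mult_mono) auto
  also have "\<dots> = ennreal ((1/16) * ((4/3) * (1-s) powr (-3/4)) * (8 * s powr (1/4)))"
    by (rule ennreal_mult[symmetric]) simp_all
  finally have A: "(\<integral>\<^sup>+ z. ennreal ((cmod (deriv ff z))\<^sup>2 * (2 / (1 + (cmod (ff z))\<^sup>2))\<^sup>2) * indicator (ball 0 s) z \<partial>lborel)
        \<le> ennreal ((1/16) * ((4/3) * (1-s) powr (-3/4)) * (8 * s powr (1/4)))" .
  have "nev_S ff s \<le> ennreal ((1/16) * ((4/3) * (1-s) powr (-3/4)) * (8 * s powr (1/4))) / ennreal (4 * pi)"
    unfolding nev_S_def by (rule divide_right_mono_ennreal[OF A])
  also have "\<dots> = ennreal ((1/16) * ((4/3) * (1-s) powr (-3/4)) * (8 * s powr (1/4)) / (4 * pi))"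
    by (rule divide_ennreal) auto
  finally show ?thesis .
qed

lemma prod_bound: fixes s :: real assumes "0 < s" "s < 1"
  shows "s powr (-3/4) * (1-s) powr (-3/4) \<le> 2 * (s powr (-3/4) + (1-s) powr (-3/4))"
proof -
  have two: "(1/2::real) powr (-3/4) \<le> 2"
  proof -
    have "(1/2::real) powr (-3/4) = 2 powr (3/4)" by (simp add: powr_minus_divide powr_divide)
    also have "\<dots> \<le> 2 powr 1" by (intro powr_mono) auto
    finally show ?thesis by simp
  qed
  show ?thesis
  proof (cases "s \<le> 1/2")
    case True
    then have "(1-s) powr (-3/4) \<le> (1/2) powr (-3/4)" using assms by (intro powr_mono2') auto
    with two have "(1-s) powr (-3/4) \<le> 2" by simp
    then have "s powr (-3/4) * (1-s) powr (-3/4) \<le> s powr (-3/4) * 2" by (intro mult_left_mono) auto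
    then show ?thesis using powr_ge_zero[of "1-s" "-3/4"] by (simp only: distrib_left; linarith)
  next
    case False
    then have "s powr (-3/4) \<le> (1/2) powr (-3/4)" using assms by (intro powr_mono2') auto
    with two have "s powr (-3/4) \<le> 2" by simp
    then have "s powr (-3/4) * (1-s) powr (-3/4) \<le> 2 * (1-s) powr (-3/4)" by (intro mult_right_mono) auto
    then show ?thesis using powr_ge_zero[of "s" "-3/4"] by (simp only: distrib_left; linarith)
  qed
qed

definition gg :: "real \<Rightarrow> real" where "gg s = (1/(3*pi)) * (s powr (-3/4) + (1-s) powr (-3/4))"

lemma gg_int: "(gg has_integral (8/(3*pi))) {0..1}"
proof -
  have "((\<lambda>s. (1/(3*pi)) * (s powr (-3/4) + (1-s) powr (-3/4))) has_integral (1/(3*pi)) * (4 + 4)) {0..1}"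
    by (intro has_integral_mult_right has_integral_add I3a I3b)
  then show ?thesis unfolding gg_def by simp
qed

lemma pt2: fixes s r :: real assumes "r < 1"
  shows "nev_S ff s * ennreal (1 / s) * indicator {0<..<r} s \<le> ennreal (if s \<in> {0..1} then gg s else 0)"
proof (cases "s \<in> {0<..<r}")
  case False then show ?thesis by simp
next
  case True
  then have s: "0 < s" "s < 1" using assms by auto
  define C where "C = (1/16) * ((4/3) * (1-s) powr (-3/4)) * (8 * s powr (1/4)) / (4 * pi)"
  have C: "0 \<le> C" unfolding C_def by simp
  have "nev_S ff s * ennreal (1 / s) \<le> ennreal C * ennreal (1/s)"
    using nevS_bound[OF s] unfolding C_def by (intro mult_right_mono) auto
  also have "\<dots> = ennreal (C * (1/s))" using C s by (intro ennreal_mult[symmetric]) auto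
  also have "\<dots> \<le> ennreal (gg s)"
  proof (rule ennreal_leI)
    have sp: "s powr (1/4) * (1/s) = s powr (-3/4)"
    proof -
      have "s powr (-3/4) = s powr (1/4 + (-1))" by simp
      also have "\<dots> = s powr (1/4) * s powr (-1)" by (rule powr_add)
      also have "\<dots> = s powr (1/4) * (1/s)" using s by (simp add: powr_neg_one)
      finally show ?thesis by simp
    qed
    have "C * (1/s) = (1/(6*pi)) * (s powr (-3/4) * (1-s) powr (-3/4))"
      unfolding C_def sp[symmetric] by (simp add: field_simps)
    also have "\<dots> \<le> (1/(6*pi)) * (2 * (s powr (-3/4) + (1-s) powr (-3/4)))"
      by (intro mult_left_mono prod_bound s) auto
    also have "\<dots> = gg s" unfolding gg_def by (simp add: field_simps)
    finally show "C * (1/s) \<le> gg s" .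
  qed
  finally show ?thesis using True s by simp
qed

lemma gg_nonneg: "0 \<le> gg s" unfolding gg_def by simp
lemma gg_meas: "gg \<in> borel_measurable borel" unfolding gg_def by measurable

lemma nevT_bound: fixes r :: real assumes "r < 1"
  shows "nev_T ff r \<le> ennreal (8/(3*pi))"
proof -
  have "nev_T ff r \<le> (\<integral>\<^sup>+s. ennreal (if s \<in> {0..1} then gg s else 0) \<partial>lborel)"
    unfolding nev_T_def by (rule nn_integral_mono) (rule pt2[OF assms])
  also have "\<dots> = ennreal (8/(3*pi))"
    by (rule nn_int_interval[OF gg_int _ gg_meas]) (simp add: gg_nonneg)
  finally show ?thesis .
qed

theorem mainTheorem13:
  shows "\<exists>(f :: complex \<Rightarrow> complex) (\<theta> :: real).
           meromorphic_disc f \<and> bounded_characteristic f \<and>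
           filterlim (\<lambda>\<rho>. L_S f \<theta> \<rho> / \<rho>) at_top at_top \<and>
           (\<lambda>\<rho>. L_S f \<theta> \<rho>) \<notin> O(\<lambda>\<rho>. \<rho>)"
proof (intro exI conjI)
  show "meromorphic_disc ff" unfolding meromorphic_disc_def
    by (rule exI[of _ "{}"]) (simp add: ff_holo)
  show "bounded_characteristic ff" unfolding bounded_characteristic_def
    using nevT_bound by blast
  have ev: "eventually (\<lambda>\<rho>. ((1 - tanh (\<rho>/2)) powr (-1/4) - 1) / \<rho> = L_S ff 0 \<rho> / \<rho>) at_top"
    using eventually_ge_at_top[of "0::real"] by eventually_elim (simp add: L_S_ff)
  show lim: "filterlim (\<lambda>\<rho>. L_S ff 0 \<rho> / \<rho>) at_top at_top"
    by (rule filterlim_cong[THEN iffD1, OF refl refl ev tst])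
  show "(\<lambda>\<rho>. L_S ff 0 \<rho>) \<notin> O(\<lambda>\<rho>. \<rho>)"
  proof
    assume O: "(\<lambda>\<rho>. L_S ff 0 \<rho>) \<in> O(\<lambda>\<rho>. \<rho>)"
    have ev1: "eventually (\<lambda>\<rho>. L_S ff 0 \<rho> / \<rho> \<ge> 1) at_top"
      using lim by (simp add: filterlim_at_top)
    have "filterlim (\<lambda>\<rho>. norm (L_S ff 0 \<rho> / \<rho>)) at_top at_top"
      by (rule filterlim_at_top_mono[OF lim]) (use ev1 in \<open>eventually_elim, metis abs_ge_self real_norm_def\<close>)
    then have om: "(\<lambda>\<rho>. L_S ff 0 \<rho>) \<in> \<omega>(\<lambda>\<rho>. \<rho>)" by (rule smallomegaI_filterlim_at_top_norm)
    from smallomega_bigo_trans[OF om O]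
    have "eventually (\<lambda>\<rho>. L_S ff 0 \<rho> = 0) at_top" by (simp add: landau_omega.small_refl_iff)
    moreover have "eventually (\<lambda>\<rho>. L_S ff 0 \<rho> \<noteq> 0) at_top"
      using ev1 by eventually_elim auto
    ultimately have "eventually (\<lambda>_::real. False) at_top" by eventually_elim auto
    then show False by simp
  qed
qed

end
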